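(* Let $\Lambda$ be a recursive $\varepsilon$-number, and let $I$, $H$, $R_n$, $S_n$, $R_n^\alpha$, $S_n^\alpha$ be as in the context. Then for all $x, y \in H$, $n < \omega$ and $\alpha < \Lambda$: (1) $x R_n^{\alpha+1} y$ if and only if there exists $z \in H$ with $x R_n z$ and $z R_n^{\alpha} y$; (2) $x S_n^{\alpha+1} y$ if and only if there exists $z \in H$ with $x S_n z$ and $z S_n^{\alpha} y$.
   Context: Fix a recursive ordinal $\Lambda$ that is an $\varepsilon$-number, i.e. $\omega^\Lambda = \Lambda$. The ordinal logarithm is defined by $\ell(0)=0$ and $\ell(\alpha+\omega^\beta)=\beta$. An $\ell$-sequence (Ignatiev sequence) is a sequence of ordinals $x=\langle x_0,x_1,x_2,\dots\rangle$ indexed by $\omega$ with $x_{i+1}\le \ell(x_i)$ for all $i<\omega$. Let $I$ be the set of $\ell$-sequences all of whose entries are $<\Lambda$, and let $H\subseteq I$ be the set of those $x\in I$ such that $x_j=0$ for some $j<\omega$. For $n<\omega$, define $x R_n y$ for $x,y\in I$ (and $x S_n y$ for $x,y\in H$, the same condition) by: $x_m>y_m$ for all $m\le n$ and $x_i\ge y_i$ for all $i>n$. Define $R_n^\alpha$ on $I$ recursively: $x R_n^0 y$ iff $x=y$; $x R_n^{1+\alpha} y$ iff for every $\beta<1+\alpha$ there is $z\in I$ with $x R_n z$ and $z R_n^\beta y$. Define $S_n^\alpha$ on $H$ in the same way, with $S_n$ in place of $R_n$ and $z$ ranging over $H$. *)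

theory Defs
  imports Main
begin

text \<open>Ordinals are modelled as elements of an arbitrary well-ordered type 'o
(each element denotes the order type of its initial segment). Ordinal
arithmetic is defined order-theoretically inside 'o.\<close>

definition ord_iso :: "'a::linorder set \<Rightarrow> 'b::linorder set \<Rightarrow> bool" where
  "ord_iso A B \<longleftrightarrow> (\<exists>f. bij_betw f A B \<and> (\<forall>x\<in>A. \<forall>y\<in>A. x < y \<longrightarrow> f x < f y))"

definition ozero :: "'o::wellorder" where
  "ozero = (LEAST x. True)"

definition osuc :: "'o::wellorder \<Rightarrow> 'o" where
  "osuc a = (LEAST x. a < x)"

text \<open>oplus_eq a c g : a + c = g (the interval [a,g) has order type c)\<close>
definition oplus_eq :: "'o::wellorder \<Rightarrow> 'o \<Rightarrow> 'o \<Rightarrow> bool" where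
  "oplus_eq a c g \<longleftrightarrow> a \<le> g \<and> ord_iso {x. a \<le> x \<and> x < g} {x. x < c}"

definition indecomp :: "'o::wellorder \<Rightarrow> bool" where
  "indecomp c \<longleftrightarrow> ozero < c \<and> (\<forall>a<c. oplus_eq a c c)"

text \<open>omega_pow_eq b c : c = omega^b (c is the b-th indecomposable ordinal)\<close>
definition omega_pow_eq :: "'o::wellorder \<Rightarrow> 'o \<Rightarrow> bool" where
  "omega_pow_eq b c \<longleftrightarrow> indecomp c \<and> ord_iso {d. d < c \<and> indecomp d} {x. x < b}"

definition is_ell :: "'o::wellorder \<Rightarrow> 'o \<Rightarrow> bool" where
  "is_ell g b \<longleftrightarrow> (g = ozero \<and> b = ozero) \<or> (\<exists>a c. omega_pow_eq b c \<and> oplus_eq a c g)"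

definition ell :: "'o::wellorder \<Rightarrow> 'o" where
  "ell g = (THE b. is_ell g b)"

definition epsilon_number :: "'o::wellorder \<Rightarrow> bool" where
  "epsilon_number L \<longleftrightarrow> omega_pow_eq L L"

definition Iset :: "'o::wellorder \<Rightarrow> (nat \<Rightarrow> 'o) set" where
  "Iset L = {x. (\<forall>i. x (Suc i) \<le> ell (x i)) \<and> (\<forall>i. x i < L)}"

definition Hset :: "'o::wellorder \<Rightarrow> (nat \<Rightarrow> 'o) set" where
  "Hset L = {x \<in> Iset L. \<exists>j. x j = ozero}"

definition Rn :: "nat \<Rightarrow> (nat \<Rightarrow> 'o::wellorder) \<Rightarrow> (nat \<Rightarrow> 'o) \<Rightarrow> bool" where
  "Rn n x y \<longleftrightarrow> (\<forall>m\<le>n. x m > y m) \<and> (\<forall>i>n. x i \<ge> y i)"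

text \<open>Iterated relation R^alpha over domain D:
  R^0 = identity; for alpha = 1 + alpha' > 0 (so beta < 1+alpha' iff beta < alpha):
  x R^alpha y iff for all beta < alpha there is z in D with x R z and z R^beta y.\<close>
definition rel_pow :: "('s \<Rightarrow> 's \<Rightarrow> bool) \<Rightarrow> 's set \<Rightarrow> 'o::wellorder \<Rightarrow> 's \<Rightarrow> 's \<Rightarrow> bool" where
  "rel_pow R D = wfrec {(a, b). a < b}
     (\<lambda>f \<alpha> x y. if \<alpha> = ozero then x = y
                 else (\<forall>\<beta><\<alpha>. \<exists>z\<in>D. R x z \<and> f \<beta> z y))"

end

theory Submission
  imports Defs
begin

lemma wf_lt: "wf {(a, b::'o::wellorder). a < b}"
  using wf by blast

lemma rel_pow_unfold:
  "rel_pow R D (\<alpha>::'o::wellorder) x y =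
     (if \<alpha> = ozero then x = y else (\<forall>\<beta><\<alpha>. \<exists>z\<in>D. R x z \<and> rel_pow R D \<beta> z y))"
  unfolding rel_pow_def
  by (subst wfrec[OF wf_lt]) (simp add: cut_apply)

lemma ozero_le: "ozero \<le> (x::'o::wellorder)"
  unfolding ozero_def by (rule Least_le) simp

lemma ell_zero: "ell (ozero::'o::wellorder) = ozero"
proof -
  have "is_ell (ozero::'o) b \<longleftrightarrow> b = ozero" for b
  proof
    assume "is_ell (ozero::'o) b"
    then consider "b = ozero" | a c where "omega_pow_eq b c" "oplus_eq a c (ozero::'o)"
      unfolding is_ell_def by blast
    then show "b = ozero"
    proof cases
      case 2
      then have "ozero < c" unfolding omega_pow_eq_def indecomp_def by blast
      moreover from 2 have "a \<le> ozero" and iso: "ord_iso {x. a \<le> x \<and> x < (ozero::'o)} {x. x < c}"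
        unfolding oplus_eq_def by auto
      have "{x. a \<le> x \<and> x < (ozero::'o)} = {}" using ozero_le by (auto simp: not_less)
      with iso have "{x. x < c} = {}" unfolding ord_iso_def bij_betw_def by auto
      ultimately show ?thesis by auto
    qed simp
  next
    assume "b = ozero" then show "is_ell ozero b" unfolding is_ell_def by simp
  qed
  then show ?thesis unfolding ell_def by (metis the_equality)
qed

lemma osuc_less: "(\<alpha>::'o::wellorder) < L \<Longrightarrow> \<alpha> < osuc \<alpha>"
  unfolding osuc_def by (rule LeastI) 

lemma less_osuc: "(\<alpha>::'o::wellorder) < L \<Longrightarrow> \<beta> < osuc \<alpha> \<longleftrightarrow> \<beta> \<le> \<alpha>"
proof
  assume "\<beta> < osuc \<alpha>"
  moreover have "\<alpha> < \<beta> \<Longrightarrow> osuc \<alpha> \<le> \<beta>" unfolding osuc_def by (rule Least_le)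
  ultimately show "\<beta> \<le> \<alpha>" by (meson leD leI)
next
  assume "(\<alpha>::'o::wellorder) < L" "\<beta> \<le> \<alpha>"
  then show "\<beta> < osuc \<alpha>" using osuc_less by (metis le_less_trans)
qed

lemma Rn_trans: "Rn n x z \<Longrightarrow> Rn n z w \<Longrightarrow> Rn n x (w::nat \<Rightarrow> 'o::wellorder)"
  unfolding Rn_def by (meson less_trans order_trans)

definition trunc :: "nat \<Rightarrow> (nat \<Rightarrow> 'o::wellorder) \<Rightarrow> nat \<Rightarrow> 'o" where
  "trunc N z = (\<lambda>i. if i \<le> N then z i else ozero)"

lemma trunc_I: "z \<in> Iset L \<Longrightarrow> trunc N z \<in> Iset L"
  unfolding Iset_def trunc_def
  using ozero_le by (auto intro: le_less_trans)

lemma trunc_H: "z \<in> Iset L \<Longrightarrow> trunc N z \<in> Hset L"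
  unfolding Hset_def using trunc_I[of z L N]
  by (auto simp: trunc_def intro!: exI[of _ "Suc N"])

lemma trunc_Rn: "Rn n x z \<Longrightarrow> n \<le> N \<Longrightarrow> Rn n (trunc N x) (trunc N z)"
  unfolding Rn_def trunc_def by auto

lemma trunc_Rn2: "Rn n x z \<Longrightarrow> n \<le> N \<Longrightarrow> Rn n x (trunc N z)"
  unfolding Rn_def trunc_def using ozero_le by (auto intro: order_trans)

lemma trunc_rel:
  assumes y0: "\<forall>i>N. y i = ozero" and nN: "n \<le> N"
  shows "rel_pow (Rn n) (Iset L) (\<alpha>::'o::wellorder) z y \<Longrightarrow>
         rel_pow (Rn n) (Iset L) \<alpha> (trunc N z) y"
proof (induction \<alpha> arbitrary: z rule: less_induct)
  case (less \<alpha>)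
  show ?case
  proof (cases "\<alpha> = ozero")
    case True
    with less.prems have "z = y" by (simp add: rel_pow_unfold)
    then have "trunc N z = y" using y0 by (auto simp: trunc_def fun_eq_iff)
    then show ?thesis using True by (simp add: rel_pow_unfold)
  next
    case False
    show ?thesis
      unfolding rel_pow_unfold[of _ _ \<alpha>] if_not_P[OF False]
    proof (intro impI allI)
      fix \<beta> assume "\<beta> < \<alpha>"
      with less.prems False obtain w where w: "w \<in> Iset L" "Rn n z w" "rel_pow (Rn n) (Iset L) \<beta> w y"
        by (subst (asm) rel_pow_unfold) auto
      show "\<exists>w\<in>Iset L. Rn n (trunc N z) w \<and> rel_pow (Rn n) (Iset L) \<beta> w y"
        using trunc_I[OF w(1)] trunc_Rn[OF w(2) nN] less.IH[OF \<open>\<beta> < \<alpha>\<close> w(3)] by blast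
    qed
  qed
qed

lemma H_eventually_zero:
  assumes "y \<in> Hset L" shows "\<exists>j. \<forall>i\<ge>j. y i = ozero"
proof -
  from assms obtain j where j: "y j = ozero" and I: "\<forall>i. y (Suc i) \<le> ell (y i)"
    unfolding Hset_def Iset_def by auto
  have "y (j + k) = ozero" for k
  proof (induction k)
    case (Suc k)
    have "y (Suc (j + k)) \<le> ozero" using I[rule_format, of "j+k"] Suc ell_zero by metis
    then show ?case using ozero_le[of "y (Suc (j + k))"] by simp
  qed (simp add: j)
  then show ?thesis by (metis le_add_diff_inverse)
qed

lemma H_sub_I: "Hset L \<subseteq> Iset L" unfolding Hset_def by auto

lemma rtl:
  assumes a: "\<alpha> < L" and zD: "z \<in> D" and xz: "Rn n x z" and zy: "rel_pow (Rn n) D (\<alpha>::'o::wellorder) z y"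
  shows "rel_pow (Rn n) D (osuc \<alpha>) x y"
proof -
  have ne: "osuc \<alpha> \<noteq> ozero" using osuc_less[OF a] ozero_le[of \<alpha>] by auto
  show ?thesis unfolding rel_pow_unfold[of _ _ "osuc \<alpha>"] if_not_P[OF ne]
  proof (intro impI allI)
    fix \<beta> assume "\<beta> < osuc \<alpha>"
    then have "\<beta> \<le> \<alpha>" using less_osuc[OF a] by blast
    then consider "\<beta> = \<alpha>" | "\<beta> < \<alpha>" by fastforce
    then show "\<exists>z\<in>D. Rn n x z \<and> rel_pow (Rn n) D \<beta> z y"
    proof cases
      case 1 then show ?thesis using zD xz zy by blast
    next
      case 2
      then have "\<alpha> \<noteq> ozero" using ozero_le[of \<beta>] by auto
      with zy 2 obtain w where "w \<in> D" "Rn n z w" "rel_pow (Rn n) D \<beta> w y"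
        by (subst (asm) rel_pow_unfold) auto
      then show ?thesis using Rn_trans[OF xz] by blast
    qed
  qed
qed

lemma ltr:
  assumes a: "\<alpha> < L" and "rel_pow (Rn n) D (osuc \<alpha>) x y"
  shows "\<exists>z\<in>D. Rn n x z \<and> rel_pow (Rn n) D (\<alpha>::'o::wellorder) z y"
proof -
  have ne: "osuc \<alpha> \<noteq> ozero" using osuc_less[OF a] ozero_le[of \<alpha>] by auto
  with assms(2) osuc_less[OF a] show ?thesis by (subst (asm) rel_pow_unfold) auto
qed

theorem proposition4p6:
  fixes \<Lambda> :: "'o::wellorder"
  assumes "epsilon_number \<Lambda>"
  shows "\<forall>x\<in>Hset \<Lambda>. \<forall>y\<in>Hset \<Lambda>. \<forall>n. \<forall>\<alpha><\<Lambda>.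
    (rel_pow (Rn n) (Iset \<Lambda>) (osuc \<alpha>) x y \<longleftrightarrow>
       (\<exists>z\<in>Hset \<Lambda>. Rn n x z \<and> rel_pow (Rn n) (Iset \<Lambda>) \<alpha> z y)) \<and>
    (rel_pow (Rn n) (Hset \<Lambda>) (osuc \<alpha>) x y \<longleftrightarrow>
       (\<exists>z\<in>Hset \<Lambda>. Rn n x z \<and> rel_pow (Rn n) (Hset \<Lambda>) \<alpha> z y))"
proof (intro ballI allI impI conjI iffI)
  fix x y n and \<alpha> :: 'o
  assume x: "x \<in> Hset \<Lambda>" and y: "y \<in> Hset \<Lambda>" and a: "\<alpha> < \<Lambda>"
  {
    assume "rel_pow (Rn n) (Iset \<Lambda>) (osuc \<alpha>) x y"
    from ltr[OF a this] obtain z where z: "z \<in> Iset \<Lambda>" "Rn n x z" "rel_pow (Rn n) (Iset \<Lambda>) \<alpha> z y"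
      by blast
    obtain j where j: "\<forall>i\<ge>j. y i = ozero" using H_eventually_zero[OF y] by blast
    let ?N = "max n j"
    have y0: "\<forall>i>?N. y i = ozero" using j by auto
    show "\<exists>z\<in>Hset \<Lambda>. Rn n x z \<and> rel_pow (Rn n) (Iset \<Lambda>) \<alpha> z y"
      using trunc_H[OF z(1), of ?N] trunc_Rn2[OF z(2), of ?N] trunc_rel[OF y0 _ z(3)] by auto
  next
    assume "\<exists>z\<in>Hset \<Lambda>. Rn n x z \<and> rel_pow (Rn n) (Iset \<Lambda>) \<alpha> z y"
    then show "rel_pow (Rn n) (Iset \<Lambda>) (osuc \<alpha>) x y"
      using rtl[OF a] H_sub_I by blast
  next
    assume "rel_pow (Rn n) (Hset \<Lambda>) (osuc \<alpha>) x y"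
    from ltr[OF a this] show "\<exists>z\<in>Hset \<Lambda>. Rn n x z \<and> rel_pow (Rn n) (Hset \<Lambda>) \<alpha> z y" .
  next
    assume "\<exists>z\<in>Hset \<Lambda>. Rn n x z \<and> rel_pow (Rn n) (Hset \<Lambda>) \<alpha> z y"
    then show "rel_pow (Rn n) (Hset \<Lambda>) (osuc \<alpha>) x y"
      using rtl[OF a] by blast
  }
qed

end
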